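(* For all $n\ge2$, $R_{n+1}\ge R_n$.
   Context: Scheduling on two machines with $n$ tasks. A processing-time matrix is $T\in\mathbb{R}_{++}^{2\times n}$; an allocation is $X\in\{0,1\}^{2\times n}$ with $X_{1j}+X_{2j}=1$; makespan $M(X,T)=\max_{i\in\{1,2\}}\sum_jX_{ij}T_{ij}$; $M^*(T)=\min_XM(X,T)$. $\mathcal{P}_n$ is the set of Borel probability measures on $\mathbb{R}^n$ supported in $\mathbb{R}_{++}^n$. For $\mathbb{P}\in\mathcal{P}_n$, algorithm $\mathcal{A}^{\mathbb{P}}$ draws $\mathbf{z}\sim\mathbb{P}$ and sends task $j$ to machine 1 iff $T_{1j}/T_{2j}<z_j$ (else to machine 2); $M(\mathbb{P},T)$ is its expected makespan, $R_n(\mathbb{P})=\sup_{T\in\mathbb{R}_{++}^{2\times n}}M(\mathbb{P},T)/M^*(T)\in[1,\infty]$, and $R_n=\inf_{\mathbb{P}\in\mathcal{P}_n}R_n(\mathbb{P})$. *)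

theory Defs
  imports "HOL-Probability.Probability"
begin

text \<open>An allocation X in {0,1}^(2 x n) is encoded by the set S of tasks sent to machine 1
  (X_1j = 1 iff j in S, X_2j = 1 iff j in {..<n} - S).\<close>

definition proc_matrices :: "nat \<Rightarrow> (nat \<Rightarrow> nat \<Rightarrow> real) set" where
  "proc_matrices n = {T. \<forall>i\<in>{1,2}. \<forall>j<n. 0 < T i j}"

definition makespan :: "nat \<Rightarrow> (nat \<Rightarrow> nat \<Rightarrow> real) \<Rightarrow> nat set \<Rightarrow> real" where
  "makespan n T S = max (\<Sum>j\<in>S. T 1 j) (\<Sum>j\<in>{..<n} - S. T 2 j)"

definition opt_makespan :: "nat \<Rightarrow> (nat \<Rightarrow> nat \<Rightarrow> real) \<Rightarrow> real" where
  "opt_makespan n T = Min ((\<lambda>S. makespan n T S) ` Pow {..<n})"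

definition prob_measures :: "nat \<Rightarrow> (nat \<Rightarrow> real) measure set" where
  "prob_measures n = {P. prob_space P \<and>
      sets P = sets (PiM {..<n} (\<lambda>_. (borel :: real measure))) \<and>
      (AE z in P. \<forall>j<n. 0 < z j)}"

definition alloc :: "nat \<Rightarrow> (nat \<Rightarrow> nat \<Rightarrow> real) \<Rightarrow> (nat \<Rightarrow> real) \<Rightarrow> nat set" where
  "alloc n T z = {j. j < n \<and> T 1 j / T 2 j < z j}"

definition exp_makespan :: "nat \<Rightarrow> (nat \<Rightarrow> real) measure \<Rightarrow> (nat \<Rightarrow> nat \<Rightarrow> real) \<Rightarrow> real" where
  "exp_makespan n P T = (\<integral>z. makespan n T (alloc n T z) \<partial>P)"

definition ratio_P :: "nat \<Rightarrow> (nat \<Rightarrow> real) measure \<Rightarrow> ereal" where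
  "ratio_P n P = (SUP T \<in> proc_matrices n. ereal (exp_makespan n P T / opt_makespan n T))"

definition ratio :: "nat \<Rightarrow> ereal" where
  "ratio n = (INF P \<in> prob_measures n. ratio_P n P)"

end

theory Submission
  imports Defs
begin

lemma comp_meas: "j < k \<Longrightarrow> (\<lambda>x. if c < x j then (a::real) else d) \<in> borel_measurable (PiM {..<k} (\<lambda>_. (borel::real measure)))"
proof -
  assume "j < k"
  have f: "(\<lambda>t::real. if c < t then a else d) \<in> borel_measurable borel" by measurable
  show ?thesis
    using measurable_compose[OF measurable_component_singleton[of j "{..<k}" "\<lambda>_. (borel::real measure)"] f] \<open>j<k\<close> by simp
qed

lemma g_eq: "makespan n T (alloc n T z) = max (\<Sum>j<n. if T 1 j / T 2 j < z j then T 1 j else 0) (\<Sum>j<n. if T 1 j / T 2 j < z j then 0 else T 2 j)"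
proof -
  have a: "alloc n T z = {j\<in>{..<n}. T 1 j / T 2 j < z j}" unfolding alloc_def by auto
  have b: "{..<n} - alloc n T z = {j\<in>{..<n}. \<not> T 1 j / T 2 j < z j}" unfolding alloc_def by auto
  show ?thesis unfolding makespan_def
    by (subst b, subst a, simp only: sum.inter_filter[OF finite_lessThan], intro arg_cong2[where f=max] sum.cong) auto
qed

lemma g_meas: "(n::nat) \<le> k \<Longrightarrow> (\<lambda>z. makespan n T (alloc n T z)) \<in> borel_measurable (PiM {..<k} (\<lambda>_. (borel::real measure)))"
  unfolding g_eq
  apply (intro borel_measurable_max borel_measurable_sum comp_meas)
   apply (auto simp: less_le_trans)
  done

lemma makespan_nonneg: "T \<in> proc_matrices n \<Longrightarrow> S \<subseteq> {..<n} \<Longrightarrow> 0 \<le> makespan n T S"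
  unfolding makespan_def proc_matrices_def
  by (rule max.coboundedI1, rule sum_nonneg) (auto intro: less_imp_le)

lemma makespan_pos: "T \<in> proc_matrices n \<Longrightarrow> S \<subseteq> {..<n} \<Longrightarrow> 0 < n \<Longrightarrow> 0 < makespan n T S"
proof -
  assume T: "T \<in> proc_matrices n" and S: "S \<subseteq> {..<n}" and n: "0 < n"
  have p: "\<And>i j. i \<in> {1,2} \<Longrightarrow> j < n \<Longrightarrow> 0 < T i j" using T unfolding proc_matrices_def by auto
  show ?thesis
  proof (cases "0 \<in> S")
    case True
    have "T 1 0 \<le> (\<Sum>j\<in>S. T 1 j)"
      by (rule member_le_sum) (use True S p finite_subset[OF S(1) finite_lessThan] in \<open>auto intro: less_imp_le\<close>)
    moreover have "0 < T 1 0" using p n by auto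
    ultimately show ?thesis unfolding makespan_def by linarith
  next
    case False
    have "T 2 0 \<le> (\<Sum>j\<in>{..<n}-S. T 2 j)"
      by (rule member_le_sum) (use False n p in \<open>auto intro: less_imp_le\<close>)
    moreover have "0 < T 2 0" using p n by auto
    ultimately show ?thesis unfolding makespan_def by linarith
  qed
qed

lemma alloc_sub: "alloc n T z \<subseteq> {..<n}" unfolding alloc_def by auto

lemma g_bound: "T \<in> proc_matrices n \<Longrightarrow> norm (makespan n T (alloc n T z)) \<le> (\<Sum>j<n. T 1 j + T 2 j)"
proof -
  assume T: "T \<in> proc_matrices n"
  have p: "\<And>i j. i \<in> {1,2} \<Longrightarrow> j < n \<Longrightarrow> 0 < T i j" using T unfolding proc_matrices_def by auto
  have n1: "\<And>j. j < n \<Longrightarrow> 0 \<le> T 1 j" and n2: "\<And>j. j < n \<Longrightarrow> 0 \<le> T 2 j"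
    using p by (auto intro: less_imp_le)
  have n1': "\<And>j. j < n \<Longrightarrow> 0 \<le> T (Suc 0) j" using n1 by simp
  have "makespan n T (alloc n T z) \<le> (\<Sum>j<n. T 1 j + T 2 j)"
    unfolding g_eq
    by (intro max.boundedI sum_mono) (auto simp: n1 n1' n2 add_increasing add_increasing2)
  moreover have "0 \<le> makespan n T (alloc n T z)" using makespan_nonneg[OF T alloc_sub] .
  ultimately show ?thesis by simp
qed

lemma g_integrable:
  assumes P: "prob_space P" "sets P = sets (PiM {..<k} (\<lambda>_. (borel::real measure)))"
    and nk: "n \<le> k" and T: "T \<in> proc_matrices n"
  shows "integrable P (\<lambda>z. makespan n T (alloc n T z))"
proof -
  interpret prob_space P by fact
  have m: "(\<lambda>z. makespan n T (alloc n T z)) \<in> borel_measurable P"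
    unfolding measurable_cong_sets[OF P(2) refl] by (rule g_meas[OF nk])
  show ?thesis
    by (rule integrable_const_bound[where B="\<Sum>j<n. T 1 j + T 2 j"]) (use g_bound[OF T] m in auto)
qed

lemma opt_props:
  assumes T: "T \<in> proc_matrices n" and n: "0 < n"
  shows "0 < opt_makespan n T" "\<exists>S\<subseteq>{..<n}. opt_makespan n T = makespan n T S"
    "\<And>S. S \<subseteq> {..<n} \<Longrightarrow> opt_makespan n T \<le> makespan n T S"
proof -
  have fin: "finite ((\<lambda>S. makespan n T S) ` Pow {..<n})" by simp
  have ne: "(\<lambda>S. makespan n T S) ` Pow {..<n} \<noteq> {}" by blast
  show "0 < opt_makespan n T" unfolding opt_makespan_def
    using Min_gr_iff[OF fin ne] makespan_pos[OF T _ n] by auto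
  show "\<exists>S\<subseteq>{..<n}. opt_makespan n T = makespan n T S" unfolding opt_makespan_def
    using Min_in[OF fin ne] by auto
  show "\<And>S. S \<subseteq> {..<n} \<Longrightarrow> opt_makespan n T \<le> makespan n T S" unfolding opt_makespan_def
    by (rule Min_le[OF fin]) auto
qed

lemma eps_lemma:
  assumes h: "\<And>e::real. e > 0 \<Longrightarrow> ereal (x / (1 + e)) \<le> R"
  shows "ereal x \<le> R"
proof (cases R)
  case (real r)
  have hr: "\<And>e. e > 0 \<Longrightarrow> x / (1 + e) \<le> r" using h real by fastforce
  show ?thesis
  proof (rule ccontr)
    assume "\<not> ereal x \<le> R"
    hence xr: "r < x" using real by simp
    have "x / 2 \<le> r" using hr[of 1] by simp
    hence x0: "0 < x" and r0: "0 < r" using xr by linarith+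
    define e where "e = (x - r) / (2 * r)"
    have e0: "e > 0" unfolding e_def using xr r0 by simp
    have "(1 + e) * r = r + (x - r) / 2" unfolding e_def using r0 by (simp add: field_simps)
    also have "\<dots> < x" using xr by (simp add: field_simps)
    finally have "r < x / (1 + e)" using e0 by (simp add: field_simps)
    with hr[OF e0] show False by simp
  qed
next
  case PInf then show ?thesis by simp
next
  case MInf then show ?thesis using h[of 1] by simp
qed

lemma key:
  assumes P: "P \<in> prob_measures (Suc n)" and T: "T \<in> proc_matrices n" and n: "0 < n"
    and e: "0 < e"
  shows "ereal ((\<integral>z. makespan n T (alloc n T z) \<partial>P) / ((1 + e) * opt_makespan n T)) \<le> ratio_P (Suc n) P"
proof -
  have ps: "prob_space P" and sP: "sets P = sets (PiM {..<Suc n} (\<lambda>_. (borel::real measure)))"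
    using P unfolding prob_measures_def by auto
  define Om where "Om = opt_makespan n T"
  have Om0: "0 < Om" unfolding Om_def using opt_props(1)[OF T n] .
  obtain S where S: "S \<subseteq> {..<n}" "Om = makespan n T S" using opt_props(2)[OF T n] unfolding Om_def by auto
  define T' where "T' = (\<lambda>i j. if j = n then e * Om else T i j)"
  have p: "\<And>i j. i \<in> {1,2} \<Longrightarrow> j < n \<Longrightarrow> 0 < T i j" using T unfolding proc_matrices_def by auto
  have T': "T' \<in> proc_matrices (Suc n)"
    unfolding proc_matrices_def T'_def using p Om0 e by (auto simp: less_Suc_eq)
  define E where "E = (\<integral>z. makespan n T (alloc n T z) \<partial>P)"
  define E' where "E' = exp_makespan (Suc n) P T'"
  have mono: "makespan n T (alloc n T z) \<le> makespan (Suc n) T' (alloc (Suc n) T' z)" for z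
  proof -
    have c: "\<And>f g. (\<Sum>j<n. f (T' 1 j) (T' 2 j) (z j)) = (\<Sum>j<n. f (T 1 j) (T 2 j) (z j))"
      by (rule sum.cong) (auto simp: T'_def)
    show ?thesis unfolding g_eq
      using c[of "\<lambda>a b c. if a / b < c then a else 0"] c[of "\<lambda>a b c. if a / b < c then 0 else b"]
        mult_pos_pos[OF e Om0]
      by (auto simp: T'_def max_def)
  qed
  have EE': "E \<le> E'"
    unfolding E_def E'_def exp_makespan_def
    by (rule integral_mono[OF g_integrable[OF ps sP _ T] g_integrable[OF ps sP _ T'] mono]) auto
  have E0: "0 \<le> E" unfolding E_def
    by (rule integral_nonneg_AE) (use makespan_nonneg[OF T alloc_sub] in auto)
  have Om'0: "0 < opt_makespan (Suc n) T'" using opt_props(1)[OF T'] by simp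
  have "opt_makespan (Suc n) T' \<le> makespan (Suc n) T' (insert n S)"
    by (rule opt_props(3)[OF T']) (use S in auto)
  also have "\<dots> \<le> (1 + e) * Om"
  proof -
    have nS: "n \<notin> S" using S by auto
    have s1: "(\<Sum>j\<in>insert n S. T' 1 j) = e * Om + (\<Sum>j\<in>S. T 1 j)"
      using nS S finite_subset[OF S(1)] by (simp add: T'_def cong: sum.cong) (auto intro!: sum.cong simp: T'_def)
    have d: "{..<Suc n} - insert n S = {..<n} - S" by auto
    have s2: "(\<Sum>j\<in>{..<n} - S. T' 2 j) = (\<Sum>j\<in>{..<n} - S. T 2 j)"
      by (rule sum.cong) (auto simp: T'_def)
    have "makespan (Suc n) T' (insert n S) = max (e * Om + (\<Sum>j\<in>S. T 1 j)) (\<Sum>j\<in>{..<n} - S. T 2 j)"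
      unfolding makespan_def s1 d s2 ..
    also have "\<dots> \<le> e * Om + Om"
    proof -
      have "(\<Sum>j\<in>S. T 1 j) \<le> Om" "(\<Sum>j\<in>{..<n} - S. T 2 j) \<le> Om"
        unfolding S(2) makespan_def by auto
      thus ?thesis using mult_pos_pos[OF e Om0] by linarith
    qed
    finally show ?thesis by (simp add: algebra_simps)
  qed
  finally have Om'le: "opt_makespan (Suc n) T' \<le> (1 + e) * Om" .
  have "E / ((1 + e) * Om) \<le> E' / opt_makespan (Suc n) T'"
    by (rule frac_le) (use E0 EE' Om'0 Om'le in auto)
  hence "ereal (E / ((1 + e) * Om)) \<le> ereal (E' / opt_makespan (Suc n) T')" by simp
  also have "\<dots> \<le> ratio_P (Suc n) P"
    unfolding ratio_P_def E'_def by (rule SUP_upper[OF T'])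
  finally show ?thesis unfolding E_def Om_def .
qed

theorem corollary4:
  fixes n :: nat
  assumes "n \<ge> 2"
  shows "ratio (Suc n) \<ge> ratio n"
  unfolding ratio_def
proof (rule INF_greatest)
  fix P assume P: "P \<in> prob_measures (Suc n)"
  have n: "0 < n" using assms by simp
  have ps: "prob_space P" and sP: "sets P = sets (PiM {..<Suc n} (\<lambda>_. (borel::real measure)))"
    and ae: "AE z in P. \<forall>j<Suc n. 0 < z j"
    using P unfolding prob_measures_def by auto
  interpret prob_space P by fact
  define r where "r = (\<lambda>z::nat\<Rightarrow>real. restrict z {..<n})"
  have rm: "r \<in> measurable P (PiM {..<n} (\<lambda>_. (borel::real measure)))"
    unfolding r_def measurable_cong_sets[OF sP refl]
    by (rule measurable_restrict_subset) auto
  define P' where "P' = distr P (PiM {..<n} (\<lambda>_. (borel::real measure))) r"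
  have P': "P' \<in> prob_measures n"
  proof -
    have "prob_space P'" unfolding P'_def by (rule prob_space_distr[OF rm])
    moreover have "sets P' = sets (PiM {..<n} (\<lambda>_. (borel::real measure)))" unfolding P'_def by simp
    moreover have "AE z in P'. \<forall>j<n. 0 < z j"
    proof -
      have "{x \<in> space (PiM {..<n} (\<lambda>_. (borel::real measure))). \<forall>j<n. 0 < x j} \<in> sets (PiM {..<n} (\<lambda>_. (borel::real measure)))"
        by measurable
      hence "(AE z in P'. \<forall>j<n. 0 < z j) = (AE z in P. \<forall>j<n. 0 < r z j)"
        unfolding P'_def by (rule AE_distr_iff[OF rm])
      moreover have "AE z in P. \<forall>j<n. 0 < r z j" using ae by eventually_elim (auto simp: r_def)
      ultimately show ?thesis by simp
    qed
    ultimately show ?thesis unfolding prob_measures_def by auto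
  qed
  have "ratio_P n P' \<le> ratio_P (Suc n) P"
    unfolding ratio_P_def[of n P']
  proof (rule SUP_least)
    fix T assume T: "T \<in> proc_matrices n"
    have "exp_makespan n P' T = (\<integral>z. makespan n T (alloc n T (r z)) \<partial>P)"
      unfolding exp_makespan_def P'_def by (rule integral_distr[OF rm g_meas]) simp
    also have "\<dots> = (\<integral>z. makespan n T (alloc n T z) \<partial>P)"
    proof -
      have "alloc n T (r z) = alloc n T z" for z unfolding alloc_def r_def by auto
      thus ?thesis by simp
    qed
    finally have eq: "exp_makespan n P' T = (\<integral>z. makespan n T (alloc n T z) \<partial>P)" .
    have O0: "0 < opt_makespan n T" using opt_props(1)[OF T n] .
    have h: "ereal (exp_makespan n P' T / opt_makespan n T / (1 + e)) \<le> ratio_P (Suc n) P"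
      if e: "0 < e" for e :: real
    proof -
      have "exp_makespan n P' T / opt_makespan n T / (1 + e) = (\<integral>z. makespan n T (alloc n T z) \<partial>P) / ((1 + e) * opt_makespan n T)"
        unfolding eq by (simp add: field_simps)
      thus ?thesis using key[OF P T n e] by simp
    qed
    show "ereal (exp_makespan n P' T / opt_makespan n T) \<le> ratio_P (Suc n) P"
      by (rule eps_lemma) (rule h)
  qed
  moreover have "(INF P\<in>prob_measures n. ratio_P n P) \<le> ratio_P n P'" by (rule INF_lower[OF P'])
  ultimately show "(INF P\<in>prob_measures n. ratio_P n P) \<le> ratio_P (Suc n) P" by simp
qed

end
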